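(* Let $G=(V,E)$ be a graph with $n$ vertices and integer edge weights $w\colon E\to\{1,\dots,W\}$, let $\beta\in(0,1]$, and run the clustering defined in the context with $p=\beta/4$ and $r=\left\lceil \frac{1}{p}\ln\!\left(\frac{n^2}{p}\right)+\frac{1}{4p}\right\rceil$. Then for every edge $(u,v)\in E$, the probability that $u$ and $v$ belong to different clusters (i.e., $c_u\neq c_v$) is at most $4p\cdot w(u,v)$.
   Context: Setting (the clustering): $G=(V,E)$ has integer edge weights, $d_G$ is the weighted shortest-path distance, and each vertex has a distinct identifier $\mathrm{ID}(v)$. For $p\in(0,1)$, $r\in\mathbb{N}$, let $\mathrm{GeomCap}(p,r)$ be the distribution on $\{0,\dots,r\}$ with $\Pr[=i]=p(1-p)^i$ for $0\leq i\leq r-1$ and $\Pr[=r]=(1-p)^r$. Each vertex $v$ independently samples $\delta_v\sim\mathrm{GeomCap}(p,r)$. For $u,x\in V$ define $d^{(u)}(s,x):=r-\delta_u+d_G(u,x)$ and $d_{G'}(s,x):=\min_{u\in V} d^{(u)}(s,x)$. The cluster center $c_x$ of $x$ is the vertex $u$ with smallest $\mathrm{ID}$ among those with $d^{(u)}(s,x)=d_{G'}(s,x)$; the cluster of a center $c$ is $\{x\in V: c_x=c\}$. *)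

theory Defs
  imports "HOL-Probability.Probability" "HOL-Library.Extended_Nat"
begin

definition geom_cap :: "real \<Rightarrow> nat \<Rightarrow> nat pmf" where
  "geom_cap p r = embed_pmf (\<lambda>i. if i < r then p * (1 - p) ^ i
                                  else if i = r then (1 - p) ^ r else 0)"

definition is_walk :: "'a set \<Rightarrow> ('a \<times> 'a) set \<Rightarrow> 'a list \<Rightarrow> 'a \<Rightarrow> 'a \<Rightarrow> bool" where
  "is_walk V E xs u x \<longleftrightarrow> xs \<noteq> [] \<and> set xs \<subseteq> V \<and> hd xs = u \<and> last xs = x \<and>
     (\<forall>i < length xs - 1. (xs ! i, xs ! Suc i) \<in> E)"

definition walk_weight :: "('a \<Rightarrow> 'a \<Rightarrow> nat) \<Rightarrow> 'a list \<Rightarrow> nat" where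
  "walk_weight w xs = (\<Sum>i < length xs - 1. w (xs ! i) (xs ! Suc i))"

text \<open>Weighted shortest-path distance d_G (infinite if unreachable).\<close>
definition dG :: "'a set \<Rightarrow> ('a \<times> 'a) set \<Rightarrow> ('a \<Rightarrow> 'a \<Rightarrow> nat) \<Rightarrow> 'a \<Rightarrow> 'a \<Rightarrow> enat" where
  "dG V E w u x = Inf {enat (walk_weight w xs) | xs. is_walk V E xs u x}"

definition d_via :: "'a set \<Rightarrow> ('a \<times> 'a) set \<Rightarrow> ('a \<Rightarrow> 'a \<Rightarrow> nat) \<Rightarrow> nat \<Rightarrow> ('a \<Rightarrow> nat) \<Rightarrow> 'a \<Rightarrow> 'a \<Rightarrow> enat" where
  "d_via V E w r \<delta> u x = enat (r - \<delta> u) + dG V E w u x"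

definition d_super :: "'a set \<Rightarrow> ('a \<times> 'a) set \<Rightarrow> ('a \<Rightarrow> 'a \<Rightarrow> nat) \<Rightarrow> nat \<Rightarrow> ('a \<Rightarrow> nat) \<Rightarrow> 'a \<Rightarrow> enat" where
  "d_super V E w r \<delta> x = Min ((\<lambda>u. d_via V E w r \<delta> u x) ` V)"

definition center :: "'a set \<Rightarrow> ('a \<times> 'a) set \<Rightarrow> ('a \<Rightarrow> 'a \<Rightarrow> nat) \<Rightarrow> ('a \<Rightarrow> nat) \<Rightarrow> nat \<Rightarrow> ('a \<Rightarrow> nat) \<Rightarrow> 'a \<Rightarrow> 'a" where
  "center V E w ID r \<delta> x = (THE c. c \<in> V \<and> d_via V E w r \<delta> c x = d_super V E w r \<delta> x \<and>
       (\<forall>u \<in> V. d_via V E w r \<delta> u x = d_super V E w r \<delta> x \<longrightarrow> ID c \<le> ID u))"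

end

theory Submission
  imports Defs
begin


definition gf :: "real \<Rightarrow> nat \<Rightarrow> nat \<Rightarrow> real" where
 "gf p r = (\<lambda>i. if i < r then p * (1 - p) ^ i else if i = r then (1 - p) ^ r else 0)"

lemma geo_telescope:
  fixes p :: real
  shows "(\<Sum>j\<in>{i..<i+m}. p * (1-p)^j) = (1-p)^i - (1-p)^(i+m)"
  by (induction m) (auto simp: algebra_simps)

lemma pmf_geom:
  fixes p :: real assumes p: "0 \<le> p" "p \<le> 1"
  shows "pmf (geom_cap p r) i = gf p r i"
proof -
  have nn: "\<And>x. 0 \<le> gf p r x" using p by (auto simp: gf_def)
  have "(\<Sum>x\<in>{..r}. gf p r x) = 1"
  proof -
    have "(\<Sum>x\<in>{..r}. gf p r x) = (\<Sum>x\<in>{0..<r}. gf p r x) + gf p r r"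
      by (simp add: atLeast0LessThan lessThan_Suc_atMost[symmetric])
    also have "(\<Sum>x\<in>{0..<r}. gf p r x) = (\<Sum>x\<in>{0..<0+r}. p * (1-p)^x)"
      by (auto simp: gf_def intro!: sum.cong)
    also have "\<dots> = 1 - (1-p)^r" by (subst geo_telescope) simp
    finally show ?thesis by (simp add: gf_def)
  qed
  have "(\<integral>\<^sup>+x. ennreal (gf p r x) \<partial>count_space UNIV) = (\<Sum>x\<in>{..r}. ennreal (gf p r x))"
    by (rule nn_integral_count_space') (auto simp: gf_def)
  also have "\<dots> = ennreal (\<Sum>x\<in>{..r}. gf p r x)" by (rule sum_ennreal) (rule nn)
  finally have "(\<integral>\<^sup>+x. ennreal (gf p r x) \<partial>count_space UNIV) = 1" using \<open>_ = 1\<close> by simp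
  thus ?thesis unfolding geom_cap_def gf_def[symmetric]
    by (subst pmf_embed_pmf) (auto simp: nn)
qed

lemma set_geom: assumes "0 \<le> p" "p \<le> 1" shows "set_pmf (geom_cap p r) \<subseteq> {..r}"
  using assms by (auto simp: set_pmf_eq pmf_geom gf_def split: if_splits)

lemma prob_restrict: assumes "0 \<le> p" "p \<le> 1"
  shows "measure_pmf.prob (geom_cap p r) S = (\<Sum>i\<in>S \<inter> {..r}. gf p r i)"
proof -
  have "measure_pmf.prob (geom_cap p r) S = measure_pmf.prob (geom_cap p r) (S \<inter> {..r})"
    using set_geom[OF assms] by (intro measure_prob_cong_0) (auto simp: set_pmf_eq)
  also have "\<dots> = (\<Sum>i\<in>S \<inter> {..r}. gf p r i)"
    by (subst measure_measure_pmf_finite) (auto simp: pmf_geom assms)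
  finally show ?thesis .
qed

lemma prob_tail: assumes "0 \<le> p" "p \<le> 1" "t \<le> r"
  shows "measure_pmf.prob (geom_cap p r) {t..} = (1-p)^t"
proof -
  have "{t..} \<inter> {..r} = insert r {t..<t+(r-t)}" using assms(3) by auto
  hence "measure_pmf.prob (geom_cap p r) {t..} = gf p r r + (\<Sum>i\<in>{t..<t+(r-t)}. gf p r i)"
    by (simp add: prob_restrict assms)
  also have "(\<Sum>i\<in>{t..<t+(r-t)}. gf p r i) = (\<Sum>i\<in>{t..<t+(r-t)}. p*(1-p)^i)"
    by (auto simp: gf_def intro!: sum.cong)
  also have "\<dots> = (1-p)^t - (1-p)^r" using assms(3) by (subst geo_telescope) simp
  finally show ?thesis by (simp add: gf_def)
qed

lemma geo_window:
  fixes p :: real assumes p: "0 \<le> p" "p \<le> 1" and t: "t \<le> r"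
  shows "measure_pmf.prob (geom_cap p r) {t..<t+k} \<le> k * p * measure_pmf.prob (geom_cap p r) {t..} + (1-p)^(r+1-k)"
proof (cases "t + k \<le> r")
  case True
  have d: "{t..<t+k} \<inter> {t+k..} = {}" by auto
  have "{t..} = {t..<t+k} \<union> {t+k..}" by auto
  hence "measure_pmf.prob (geom_cap p r) {t..} = measure_pmf.prob (geom_cap p r) {t..<t+k} + measure_pmf.prob (geom_cap p r) {t+k..}"
    using measure_pmf.finite_measure_Union[of "{t..<t+k}" "geom_cap p r" "{t+k..}"] d by simp
  hence "measure_pmf.prob (geom_cap p r) {t..<t+k} = (1-p)^t - (1-p)^(t+k)"
    using prob_tail[OF p t] prob_tail[OF p True] by simp
  also have "\<dots> = (1-p)^t * (1 - (1-p)^k)" by (simp add: power_add algebra_simps)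
  also have "\<dots> \<le> (1-p)^t * (k*p)"
  proof (rule mult_left_mono)
    have "1 + real k * (-p) \<le> (1 + -p)^k" by (rule Bernoulli_inequality) (use p in auto)
    thus "1 - (1-p)^k \<le> k*p" by simp
  qed (use p in auto)
  also have "\<dots> = k*p*measure_pmf.prob (geom_cap p r) {t..}" using prob_tail[OF p t] by simp
  moreover have "0 \<le> (1-p)^(r+1-k)" using p by simp
  ultimately show ?thesis by linarith
next
  case False
  have "measure_pmf.prob (geom_cap p r) {t..<t+k} \<le> measure_pmf.prob (geom_cap p r) {t..}"
    by (rule measure_pmf.finite_measure_mono) auto
  also have "\<dots> = (1-p)^t" by (rule prob_tail[OF p t])
  also have "\<dots> \<le> (1-p)^(r+1-k)" using False p by (intro power_decreasing) auto
  finally show ?thesis using p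
    by (smt (verit) measure_nonneg mult_nonneg_nonneg of_nat_0_le_iff)
qed




definition win :: "'a set \<Rightarrow> ('a \<Rightarrow> nat) \<Rightarrow> ('a \<Rightarrow> enat) \<Rightarrow> 'a \<Rightarrow> bool" where
  "win V ID K c \<longleftrightarrow> c \<in> V \<and> (\<forall>c'\<in>V. K c \<le> K c') \<and> (\<forall>c'\<in>V. K c' = K c \<longrightarrow> ID c \<le> ID c')"

lemma center_iff:
  assumes fin: "finite V" and ne: "V \<noteq> {}" and inj: "inj_on ID V"
  shows "center V E w ID r \<delta> x = c \<longleftrightarrow> win V ID (\<lambda>c. d_via V E w r \<delta> c x) c"
proof -
  define K where "K = (\<lambda>c. d_via V E w r \<delta> c x)"
  have dsup: "d_super V E w r \<delta> x = Min (K ` V)" by (simp add: d_super_def K_def)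
  define Q where "Q = (\<lambda>c. c \<in> V \<and> K c = Min (K ` V) \<and> (\<forall>u\<in>V. K u = Min (K ` V) \<longrightarrow> ID c \<le> ID u))"
  have QW: "Q c' \<longleftrightarrow> win V ID K c'" for c'
  proof
    assume "Q c'" thus "win V ID K c'" unfolding Q_def win_def using fin by auto
  next
    assume h: "win V ID K c'"
    hence "K c' = Min (K ` V)" unfolding win_def using fin
      by (intro antisym) (auto intro!: Min.boundedI Min_le simp: ne)
    thus "Q c'" using h unfolding Q_def win_def by auto
  qed
  have ex: "\<exists>c. Q c"
  proof -
    define M where "M = {c\<in>V. K c = Min (K ` V)}"
    have "Min (K ` V) \<in> K ` V" using fin ne by (intro Min_in) auto
    hence Mne: "M \<noteq> {}" unfolding M_def by auto
    have Mfin: "finite M" using fin unfolding M_def by auto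
    have "Min (ID ` M) \<in> ID ` M" using Mne Mfin by (intro Min_in) auto
    then obtain c where c: "c \<in> M" "ID c = Min (ID ` M)" by auto
    have "Q c" unfolding Q_def using c Mfin unfolding M_def by auto
    thus ?thesis ..
  qed
  have uniq: "Q c1 \<Longrightarrow> Q c2 \<Longrightarrow> c1 = c2" for c1 c2
    unfolding Q_def using inj by (metis inj_onD order_antisym)
  have cen: "center V E w ID r \<delta> x = (THE c. Q c)"
    unfolding center_def Q_def dsup K_def ..
  have "Q (THE c. Q c)" using ex uniq by (metis theI)
  hence "(THE c. Q c) = c \<longleftrightarrow> Q c" using uniq by blast
  thus ?thesis using cen QW K_def by simp
qed

lemma is_walk_snoc:
  assumes "is_walk V E xs c u" "(u, v) \<in> E" "v \<in> V"
  shows "is_walk V E (xs @ [v]) c v"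
  unfolding is_walk_def
proof (intro conjI allI impI)
  have xs: "xs \<noteq> []" "last xs = u" "hd xs = c" "set xs \<subseteq> V" using assms(1) by (auto simp: is_walk_def)
  show "xs @ [v] \<noteq> []" by simp
  show "set (xs @ [v]) \<subseteq> V" using xs assms by auto
  show "hd (xs @ [v]) = c" using xs by simp
  show "last (xs @ [v]) = v" by simp
  fix i assume i: "i < length (xs @ [v]) - 1"
  show "((xs @ [v]) ! i, (xs @ [v]) ! Suc i) \<in> E"
  proof (cases "i < length xs - 1")
    case True
    thus ?thesis using assms(1) by (auto simp: is_walk_def nth_append)
  next
    case False
    hence "i = length xs - 1" using i by simp
    thus ?thesis using xs assms(2) by (auto simp: nth_append last_conv_nth)
  qed
qed

lemma walk_weight_snoc:
  assumes "xs \<noteq> []" "last xs = u"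
  shows "walk_weight w (xs @ [v]) = walk_weight w xs + w u v"
proof -
  have l: "length (xs @ [v]) - 1 = Suc (length xs - 1)" using assms by simp
  have "walk_weight w (xs @ [v]) = (\<Sum>i<length xs - 1. w ((xs@[v]) ! i) ((xs@[v]) ! Suc i)) + w ((xs@[v]) ! (length xs - 1)) ((xs@[v]) ! Suc (length xs - 1))"
    unfolding walk_weight_def l by simp
  also have "(\<Sum>i<length xs - 1. w ((xs@[v]) ! i) ((xs@[v]) ! Suc i)) = walk_weight w xs"
    unfolding walk_weight_def by (intro sum.cong) (auto simp: nth_append)
  also have "w ((xs@[v]) ! (length xs - 1)) ((xs@[v]) ! Suc (length xs - 1)) = w u v"
    using assms by (simp add: nth_append last_conv_nth)
  finally show ?thesis .
qed

lemma dG_edge: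
  assumes "(u, v) \<in> E" "v \<in> V"
  shows "dG V E w c v \<le> dG V E w c u + enat (w u v)"
proof (cases "{enat (walk_weight w xs) | xs. is_walk V E xs c u} = {}")
  case True
  thus ?thesis by (simp add: dG_def top_enat_def)
next
  case False
  let ?S = "{enat (walk_weight w xs) | xs. is_walk V E xs c u}"
  have "Inf ?S \<in> ?S" using False unfolding Inf_enat_def by (auto intro: LeastI)
  then obtain xs where xs: "is_walk V E xs c u" "dG V E w c u = enat (walk_weight w xs)"
    unfolding dG_def by auto
  have w2: "is_walk V E (xs @ [v]) c v" by (rule is_walk_snoc[OF xs(1) assms])
  have "dG V E w c v \<le> enat (walk_weight w (xs @ [v]))"
    unfolding dG_def using w2 by (intro Inf_lower) auto
  also have "\<dots> = dG V E w c u + enat (w u v)"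
    using xs(1) by (simp add: walk_weight_snoc is_walk_def xs(2))
  finally show ?thesis .
qed

lemma win_mono:
  assumes "win V ID (\<lambda>c. d_via V E w r (g(a:=y0)) c x) a" "y0 \<le> y1"
  shows "win V ID (\<lambda>c. d_via V E w r (g(a:=y1)) c x) a"
proof -
  let ?K0 = "\<lambda>c. d_via V E w r (g(a:=y0)) c x"
  let ?K1 = "\<lambda>c. d_via V E w r (g(a:=y1)) c x"
  have oth: "c \<noteq> a \<Longrightarrow> ?K1 c = ?K0 c" for c by (simp add: d_via_def)
  have aa: "?K1 a \<le> ?K0 a" unfolding d_via_def using assms(2) by (intro add_right_mono) simp
  show ?thesis using assms(1) unfolding win_def
  proof (intro conjI ballI impI)
    fix c' assume c': "c' \<in> V"
    show "?K1 a \<le> ?K1 c'"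
      using assms(1) c' aa oth unfolding win_def by (cases "c' = a") (auto intro: order_trans)
    assume eq: "?K1 c' = ?K1 a"
    show "ID a \<le> ID c'"
    proof (cases "c' = a")
      case False
      hence "?K0 c' = ?K1 a" using eq oth by simp
      hence "?K0 c' = ?K0 a" using aa assms(1) c' unfolding win_def by (metis order_antisym)
      thus ?thesis using assms(1) c' unfolding win_def by auto
    qed simp
  qed simp
qed

lemma enat_cancel: "a + enat k \<le> b + enat k \<Longrightarrow> (a::enat) \<le> b"
  by (cases a; cases b) auto

lemma win_shift:
  assumes W: "win V ID (\<lambda>c. d_via V E w r (g(a:=y0)) c u) a" and y: "y0 + 2 * k \<le> y1" "y1 \<le> r"
    and d1: "\<And>c. dG V E w c v \<le> dG V E w c u + enat k"
    and d2: "\<And>c. dG V E w c u \<le> dG V E w c v + enat k"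
  shows "win V ID (\<lambda>c. d_via V E w r (g(a:=y1)) c v) a"
proof -
  let ?K0 = "\<lambda>c. d_via V E w r (g(a:=y0)) c u"
  let ?K1 = "\<lambda>c. d_via V E w r (g(a:=y1)) c v"
  have aa: "?K1 a + enat k \<le> ?K0 a"
  proof -
    have "?K1 a + enat k = enat (r - y1) + dG V E w a v + enat k" by (simp add: d_via_def)
    also have "\<dots> \<le> enat (r - y1) + (dG V E w a u + enat k) + enat k"
      using d1 by (intro add_right_mono add_left_mono) auto
    also have "\<dots> = enat (r - y1 + 2 * k) + dG V E w a u" by (simp add: algebra_simps)
    also have "\<dots> \<le> enat (r - y0) + dG V E w a u" using y by (intro add_right_mono) simp
    finally show ?thesis by (simp add: d_via_def)
  qed
  have oth: "c \<noteq> a \<Longrightarrow> ?K0 c \<le> ?K1 c + enat k" for c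
    using d2[of c] by (simp add: d_via_def add.assoc add_left_mono)
  have aV: "a \<in> V" using W by (simp add: win_def)
  show ?thesis unfolding win_def
  proof (intro conjI ballI impI aV)
    fix c' assume c': "c' \<in> V"
    show le: "?K1 a \<le> ?K1 c'"
    proof (cases "c' = a")
      case False
      have "?K1 a + enat k \<le> ?K1 c' + enat k"
        using aa W c' oth[OF False] unfolding win_def by (meson order_trans)
      thus ?thesis by (rule enat_cancel)
    qed simp
    assume eq: "?K1 c' = ?K1 a"
    show "ID a \<le> ID c'"
    proof (cases "c' = a")
      case False
      have "?K0 a \<le> ?K0 c'" using W c' unfolding win_def by auto
      moreover have "?K0 c' \<le> ?K0 a" using oth[OF False] eq aa by (metis order_trans)
      ultimately have "?K0 c' = ?K0 a" by simp
      thus ?thesis using W c' unfolding win_def by auto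
    qed simp
  qed
qed




lemma prob_mono_r: assumes "0 \<le> p" "p \<le> 1" "S \<inter> {..r} \<subseteq> S' \<inter> {..r}"
  shows "measure_pmf.prob (geom_cap p r) S \<le> measure_pmf.prob (geom_cap p r) S'"
  unfolding prob_restrict[OF assms(1,2)]
  by (rule sum_mono2) (use assms in \<open>auto simp: gf_def\<close>)

lemma prob_eq_r: assumes "0 \<le> p" "p \<le> 1" "S \<inter> {..r} = S' \<inter> {..r}"
  shows "measure_pmf.prob (geom_cap p r) S = measure_pmf.prob (geom_cap p r) S'"
  unfolding prob_restrict[OF assms(1,2)] assms(3) ..

lemma pointwise:
  fixes p :: real
  assumes p: "0 \<le> p" "p \<le> 1"
    and sub: "A \<subseteq> T"
    and up: "\<And>y0 y1. y0 \<in> T \<Longrightarrow> y0 \<le> y1 \<Longrightarrow> y1 \<le> r \<Longrightarrow> y1 \<in> T"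
    and far: "\<And>y0 y1. y0 \<in> T \<Longrightarrow> y0 \<le> r \<Longrightarrow> y0 + k \<le> y1 \<Longrightarrow> y1 \<le> r \<Longrightarrow> y1 \<notin> A"
  shows "measure_pmf.prob (geom_cap p r) A \<le> k * p * measure_pmf.prob (geom_cap p r) T + (1-p)^(r+1-k)"
proof (cases "T \<inter> {..r} = {}")
  case True
  hence "A \<inter> {..r} = {} \<inter> {..r}" using sub by auto
  hence "measure_pmf.prob (geom_cap p r) A = measure_pmf.prob (geom_cap p r) {}" by (rule prob_eq_r[OF p])
  hence "measure_pmf.prob (geom_cap p r) A = 0" by simp
  moreover have "0 \<le> k * p * measure_pmf.prob (geom_cap p r) T + (1-p)^(r+1-k)" using p by simp
  ultimately show ?thesis by simp
next
  case False
  define t where "t = Min (T \<inter> {..r})"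
  have t: "t \<in> T \<inter> {..r}" unfolding t_def using False by (intro Min_in) auto
  have tmin: "y \<in> T \<Longrightarrow> y \<le> r \<Longrightarrow> t \<le> y" for y unfolding t_def by (intro Min_le) auto
  have "T \<inter> {..r} = {t..} \<inter> {..r}" using t tmin up by auto
  hence eT: "measure_pmf.prob (geom_cap p r) T = measure_pmf.prob (geom_cap p r) {t..}"
    by (rule prob_eq_r[OF p])
  have "A \<inter> {..r} \<subseteq> {t..<t+k} \<inter> {..r}"
  proof
    fix y assume y: "y \<in> A \<inter> {..r}"
    hence "t \<le> y" using sub tmin by auto
    moreover have "\<not> t + k \<le> y" using far[of t y] t y by auto
    ultimately show "y \<in> {t..<t+k} \<inter> {..r}" using y by auto
  qed
  hence "measure_pmf.prob (geom_cap p r) A \<le> measure_pmf.prob (geom_cap p r) {t..<t+k}"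
    by (rule prob_mono_r[OF p])
  also have "\<dots> \<le> k * p * measure_pmf.prob (geom_cap p r) {t..} + (1-p)^(r+1-k)"
    using t by (intro geo_window p) auto
  finally show ?thesis using eT by simp
qed



lemma emeasure_Pi_split:
  assumes fin: "finite V" and a: "a \<in> V"
  shows "emeasure (Pi_pmf V d F) S = (\<integral>\<^sup>+g. emeasure (F a) {y. g(a:=y) \<in> S} \<partial>Pi_pmf (V - {a}) d F)"
proof -
  let ?R = "Pi_pmf (V - {a}) d F"
  let ?h = "\<lambda>(g, y). g(a:=y)"
  have V: "V = insert a (V - {a})" using a by auto
  have "Pi_pmf V d F = map_pmf (\<lambda>(y,f). f(a:=y)) (pair_pmf (F a) ?R)"
    by (subst V, rule Pi_pmf_insert) (use fin in auto)
  also have "\<dots> = map_pmf ?h (pair_pmf ?R (F a))"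
    by (subst pair_commute_pmf) (simp add: map_pmf_comp case_prod_beta split_beta')
  finally have P: "Pi_pmf V d F = map_pmf ?h (pair_pmf ?R (F a))" .
  have "emeasure (Pi_pmf V d F) S = emeasure (pair_pmf ?R (F a)) (?h -` S)"
    unfolding P by (rule emeasure_map_pmf)
  also have "\<dots> = (\<integral>\<^sup>+z. indicator (?h -` S) z \<partial>pair_pmf ?R (F a))"
    by (rule nn_integral_indicator[symmetric]) simp
  also have "\<dots> = (\<integral>\<^sup>+g. \<integral>\<^sup>+y. indicator (?h -` S) (g, y) \<partial>F a \<partial>?R)"
    by (rule nn_integral_pair_pmf')
  also have "\<dots> = (\<integral>\<^sup>+g. emeasure (F a) {y. g(a:=y) \<in> S} \<partial>?R)"
  proof (intro nn_integral_cong)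
    fix g
    have "(\<integral>\<^sup>+y. indicator (?h -` S) (g, y) \<partial>F a) = (\<integral>\<^sup>+y. indicator {y. g(a:=y) \<in> S} y \<partial>F a)"
      by (intro nn_integral_cong) (simp split: split_indicator)
    also have "\<dots> = emeasure (F a) {y. g(a:=y) \<in> S}" by (rule nn_integral_indicator) simp
    finally show "(\<integral>\<^sup>+y. indicator (?h -` S) (g, y) \<partial>F a) = emeasure (F a) {y. g(a:=y) \<in> S}" .
  qed
  finally show ?thesis .
qed

lemma split_bound:
  fixes c q :: real
  assumes fin: "finite V" and a: "a \<in> V" and c: "0 \<le> c" and q: "0 \<le> q"
    and pw: "\<And>g. measure_pmf.prob (F a) {y. g(a:=y) \<in> A} \<le> c * measure_pmf.prob (F a) {y. g(a:=y) \<in> B} + q"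
  shows "measure_pmf.prob (Pi_pmf V d F) A \<le> c * measure_pmf.prob (Pi_pmf V d F) B + q"
proof -
  let ?R = "Pi_pmf (V - {a}) d F"
  have "ennreal (measure_pmf.prob (Pi_pmf V d F) A) = emeasure (Pi_pmf V d F) A"
    by (simp add: measure_pmf.emeasure_eq_measure)
  also have "\<dots> = (\<integral>\<^sup>+g. emeasure (F a) {y. g(a:=y) \<in> A} \<partial>?R)"
    by (rule emeasure_Pi_split[OF fin a])
  also have "\<dots> \<le> (\<integral>\<^sup>+g. ennreal c * emeasure (F a) {y. g(a:=y) \<in> B} + ennreal q \<partial>?R)"
  proof (intro nn_integral_mono)
    fix g
    have "emeasure (F a) {y. g(a:=y) \<in> A} = ennreal (measure_pmf.prob (F a) {y. g(a:=y) \<in> A})"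
      by (simp add: measure_pmf.emeasure_eq_measure)
    also have "\<dots> \<le> ennreal (c * measure_pmf.prob (F a) {y. g(a:=y) \<in> B} + q)"
      by (intro ennreal_leI pw)
    also have "\<dots> = ennreal c * emeasure (F a) {y. g(a:=y) \<in> B} + ennreal q"
      using c q by (simp add: measure_pmf.emeasure_eq_measure ennreal_plus ennreal_mult)
    finally show "emeasure (F a) {y. g(a:=y) \<in> A} \<le> ennreal c * emeasure (F a) {y. g(a:=y) \<in> B} + ennreal q" .
  qed
  also have "\<dots> = ennreal c * (\<integral>\<^sup>+g. emeasure (F a) {y. g(a:=y) \<in> B} \<partial>?R) + ennreal q"
    by (subst nn_integral_add) (auto simp: nn_integral_cmult measure_pmf.emeasure_space_1)
  also have "\<dots> = ennreal c * emeasure (Pi_pmf V d F) B + ennreal q"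
    by (subst emeasure_Pi_split[OF fin a]) simp
  also have "\<dots> = ennreal (c * measure_pmf.prob (Pi_pmf V d F) B + q)"
    using c q by (simp add: measure_pmf.emeasure_eq_measure ennreal_plus ennreal_mult)
  finally show ?thesis using c q by (subst (asm) ennreal_le_iff) auto
qed




lemma numeric:
  fixes p :: real and n r k :: nat
  assumes p: "0 < p" "p \<le> 1" and n: "1 \<le> n"
    and r: "real r \<ge> (1 / p) * ln (real n ^ 2 / p) + 1 / (4 * p)"
    and small: "4 * p * k < 1"
  shows "real n * (1-p)^(r+1-2*k) \<le> 2 * p"
proof -
  define m where "m = r + 1 - 2*k"
  have m: "real m \<ge> real r + 1 - 2 * real k" unfolding m_def by linarith
  have "(1-p)^m \<le> exp (-p) ^ m"
    using p by (intro power_mono) (use exp_ge_add_one_self[of "-p"] in auto)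
  also have "\<dots> = exp (- p * real m)" using exp_of_nat_mult[of m "-p"] by (simp add: mult.commute)
  also have "\<dots> \<le> exp (- ln (real n ^ 2 / p) + 1/4)"
  proof (intro exp_le_cancel_iff[THEN iffD2])
    have "p * real m \<ge> p * (real r + 1 - 2 * real k)" using m p by (intro mult_left_mono) auto
    moreover have "p * real r \<ge> ln (real n ^ 2 / p) + 1/4"
    proof -
      have "p * real r \<ge> p * ((1 / p) * ln (real n ^ 2 / p) + 1 / (4 * p))" using r p by (intro mult_left_mono) auto
      moreover have "p * ((1 / p) * ln (real n ^ 2 / p) + 1 / (4 * p)) = ln (real n ^ 2 / p) + 1/4"
        using p by (simp add: distrib_left)
      ultimately show ?thesis by simp
    qed
    moreover have "p * (real r + 1 - 2 * real k) = p * real r + p - 2 * (p * real k)"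
      by (simp add: algebra_simps)
    moreover have "4 * (p * real k) < 1" using small by (simp add: mult.assoc)
    ultimately show "- p * real m \<le> - ln (real n ^ 2 / p) + 1/4" using p
      by linarith
  qed
  also have "\<dots> = exp (- ln (real n ^ 2 / p)) * exp (1/4)" by (rule exp_add)
  also have "exp (- ln (real n ^ 2 / p)) = inverse (real n ^ 2 / p)"
    using p n by (simp add: exp_minus)
  also have "inverse (real n ^ 2 / p) * exp (1/4) = exp (1/4) * (p / real n ^ 2)"
    by (simp add: field_simps)
  finally have q: "(1-p)^m \<le> exp (1/4) * (p / real n ^ 2)" .
  have e: "exp (1/4::real) \<le> 2"
  proof -
    have "exp (1/4::real) ^ 4 = exp 1" using exp_of_nat_mult[of 4 "1/4::real"] by simp
    also have "\<dots> < 2 ^ 4" using exp_le by simp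
    finally have h: "exp (1/4::real) ^ 4 < 2 ^ 4" .
    have "exp (1/4::real) < 2" by (rule power_less_imp_less_base[OF h]) simp
    thus ?thesis by simp
  qed
  have "real n * (1-p)^m \<le> real n * (exp (1/4) * (p / real n ^ 2))" using q n by (intro mult_left_mono) auto
  also have "\<dots> = exp (1/4) * p / real n" using n by (simp add: power2_eq_square field_simps)
  also have "\<dots> \<le> exp (1/4) * p"
  proof -
    have "exp (1/4) * p * 1 \<le> exp (1/4) * p * real n" using n p by (intro mult_left_mono) auto
    thus ?thesis using n by (simp add: divide_le_eq)
  qed
  also have "\<dots> \<le> 2 * p" using e p by (intro mult_right_mono) auto
  finally show ?thesis unfolding m_def .
qed




theorem lemma12:
  fixes V :: "'a set" and E :: "('a \<times> 'a) set" and w :: "'a \<Rightarrow> 'a \<Rightarrow> nat"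
    and W :: nat and ID :: "'a \<Rightarrow> nat" and \<beta> p :: real and r n :: nat and u v :: 'a
  assumes finV: "finite V"
    and E_sub: "E \<subseteq> V \<times> V"
    and E_sym: "\<And>a b. (a, b) \<in> E \<Longrightarrow> (b, a) \<in> E"
    and E_irrefl: "\<And>a. (a, a) \<notin> E"
    and w_sym: "\<And>a b. (a, b) \<in> E \<Longrightarrow> w a b = w b a"
    and w_range: "\<And>a b. (a, b) \<in> E \<Longrightarrow> w a b \<in> {1..W}"
    and ID_inj: "inj_on ID V"
    and n_def: "n = card V"
    and beta: "0 < \<beta>" "\<beta> \<le> 1"
    and p_def: "p = \<beta> / 4"
    and r_def: "r = nat \<lceil>(1 / p) * ln (real n ^ 2 / p) + 1 / (4 * p)\<rceil>"
    and edge: "(u, v) \<in> E"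
  shows "measure_pmf.prob (Pi_pmf V 0 (\<lambda>_. geom_cap p r))
           {\<delta>. center V E w ID r \<delta> u \<noteq> center V E w ID r \<delta> v} \<le> 4 * p * real (w u v)"
proof -
  have p: "0 < p" "p \<le> 1" using beta p_def by auto
  have p0: "0 \<le> p" using p by simp
  have uV: "u \<in> V" "v \<in> V" using edge E_sub by auto
  have Vne: "V \<noteq> {}" using uV by auto
  have n1: "1 \<le> n" using finV uV n_def by (metis One_nat_def Suc_leI card_gt_0_iff Vne)
  have rge: "real r \<ge> (1 / p) * ln (real n ^ 2 / p) + 1 / (4 * p)"
    unfolding r_def by (rule real_nat_ceiling_ge)
  define G where "G = geom_cap p r"
  define P where "P = Pi_pmf V (0::nat) (\<lambda>_. G)"
  define cu where "cu = (\<lambda>\<delta>. center V E w ID r \<delta> u)"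
  define cv where "cv = (\<lambda>\<delta>. center V E w ID r \<delta> v)"
  define k where "k = w u v"
  have k1: "1 \<le> k" using w_range[OF edge] k_def by auto
  have d1: "\<And>c. dG V E w c v \<le> dG V E w c u + enat k"
    unfolding k_def by (rule dG_edge[OF edge uV(2)])
  have d2: "\<And>c. dG V E w c u \<le> dG V E w c v + enat k"
    unfolding k_def w_sym[OF edge] by (rule dG_edge[OF E_sym[OF edge] uV(1)])
  have ciff: "\<And>\<delta> x c. center V E w ID r \<delta> x = c \<longleftrightarrow> win V ID (\<lambda>c. d_via V E w r \<delta> c x) c"
    by (rule center_iff[OF finV Vne ID_inj])
  define A where "A = (\<lambda>a. {\<delta>. cu \<delta> = a \<and> cv \<delta> \<noteq> a})"
  define B where "B = (\<lambda>a. {\<delta>. cu \<delta> = a})"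
  define q where "q = (1-p)^(r+1-2*k)"
  have q0: "0 \<le> q" unfolding q_def using p by simp
  have per: "measure_pmf.prob P (A a) \<le> real (2*k) * p * measure_pmf.prob P (B a) + q" if a: "a \<in> V" for a
    unfolding P_def
  proof (rule split_bound[OF finV a])
    show "0 \<le> real (2*k) * p" using p by simp
    show "0 \<le> q" by (rule q0)
    fix g :: "'a \<Rightarrow> nat"
    show "measure_pmf.prob G {y. g(a:=y) \<in> A a} \<le> real (2*k) * p * measure_pmf.prob G {y. g(a:=y) \<in> B a} + q"
      unfolding G_def q_def
    proof (rule pointwise[OF p0 p(2)])
      show "{y. g(a:=y) \<in> A a} \<subseteq> {y. g(a:=y) \<in> B a}" by (auto simp: A_def B_def)
    next
      fix y0 y1 assume h: "y0 \<in> {y. g(a:=y) \<in> B a}" "y0 \<le> y1" "y1 \<le> r"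
      have "win V ID (\<lambda>c. d_via V E w r (g(a:=y0)) c u) a" using h(1) ciff by (simp add: B_def cu_def)
      hence "win V ID (\<lambda>c. d_via V E w r (g(a:=y1)) c u) a" by (rule win_mono) (rule h(2))
      thus "y1 \<in> {y. g(a:=y) \<in> B a}" using ciff by (simp add: B_def cu_def)
    next
      fix y0 y1 assume h: "y0 \<in> {y. g(a:=y) \<in> B a}" "y0 \<le> r" "y0 + 2 * k \<le> y1" "y1 \<le> r"
      have "win V ID (\<lambda>c. d_via V E w r (g(a:=y0)) c u) a" using h(1) ciff by (simp add: B_def cu_def)
      hence "win V ID (\<lambda>c. d_via V E w r (g(a:=y1)) c v) a" by (rule win_shift[OF _ h(3,4) d1 d2])
      hence "cv (g(a:=y1)) = a" using ciff by (simp add: cv_def)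
      thus "y1 \<notin> {y. g(a:=y) \<in> A a}" by (simp add: A_def)
    qed
  qed
  have cuV: "cu \<delta> \<in> V" for \<delta>
    using ciff[of \<delta> u "cu \<delta>"] by (simp add: cu_def win_def)
  have "{\<delta>. cu \<delta> \<noteq> cv \<delta>} \<subseteq> (\<Union>a\<in>V. A a)" using cuV by (auto simp: A_def)
  hence "measure_pmf.prob P {\<delta>. cu \<delta> \<noteq> cv \<delta>} \<le> measure_pmf.prob P (\<Union>a\<in>V. A a)"
    by (intro measure_pmf.finite_measure_mono) auto
  also have "\<dots> \<le> (\<Sum>a\<in>V. measure_pmf.prob P (A a))"
    by (intro measure_pmf.finite_measure_subadditive_finite finV) auto
  also have "\<dots> \<le> (\<Sum>a\<in>V. real (2*k) * p * measure_pmf.prob P (B a) + q)"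
    by (intro sum_mono per)
  also have "\<dots> = real (2*k) * p * (\<Sum>a\<in>V. measure_pmf.prob P (B a)) + real n * q"
    by (simp add: sum.distrib sum_distrib_left n_def)
  also have "(\<Sum>a\<in>V. measure_pmf.prob P (B a)) = measure_pmf.prob P (\<Union>a\<in>V. B a)"
    by (rule measure_pmf.finite_measure_finite_Union[symmetric, OF finV]) (auto simp: disjoint_family_on_def B_def)
  also have "\<dots> \<le> 1" by (rule measure_pmf.prob_le_1)
  finally have main: "measure_pmf.prob P {\<delta>. cu \<delta> \<noteq> cv \<delta>} \<le> real (2*k) * p + real n * q"
    using p by (simp add: mult_left_mono)
  show ?thesis
  proof (cases "4 * p * k < 1")
    case True
    have "real n * q \<le> 2 * p" unfolding q_def by (rule numeric[OF p n1 rge True])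
    also have "\<dots> \<le> 2 * p * k" using p k1 by simp
    finally have nq: "real n * q \<le> 2 * p * real k" .
    have e: "real (2*k) * p = 2 * p * real k" by simp
    have "measure_pmf.prob P {\<delta>. cu \<delta> \<noteq> cv \<delta>} \<le> 4 * p * k" using main nq e by linarith
    thus ?thesis by (simp add: P_def G_def cu_def cv_def k_def)
  next
    case False
    have "measure_pmf.prob P {\<delta>. cu \<delta> \<noteq> cv \<delta>} \<le> 1" by (rule measure_pmf.prob_le_1)
    hence "measure_pmf.prob P {\<delta>. cu \<delta> \<noteq> cv \<delta>} \<le> 4 * p * k" using False by linarith
    thus ?thesis by (simp add: P_def G_def cu_def cv_def k_def)
  qed
qed


end
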